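(* Let $d$ be such that $3d/4$ and $12d\mathcal{D}$ are integers, where $\mathcal{D}=\frac{\ln n}{\sqrt d}$. Let $a$ be a uniformly random regular point and $b$ a special point in $\{-\frac1{\sqrt d},\frac1{\sqrt d}\}^d$. For $d\ge8\ln^2n$, $\Pr[a^\top b>\frac14-6\mathcal{D}]\le\frac1{n^3}$ and $\Pr[a^\top b<\frac14-18\mathcal{D}]\le\frac1{n^3}$.
   Context: A point of $\{-\frac1{\sqrt d},\frac1{\sqrt d}\}^d$ is regular if it has exactly $\frac{3d}4$ coordinates equal to $\frac1{\sqrt d}$ and $\frac d4$ equal to $-\frac1{\sqrt d}$; it is special if it has exactly $\frac{3d}4-12d\mathcal{D}$ coordinates equal to $\frac1{\sqrt d}$ and $\frac d4+12d\mathcal{D}$ equal to $-\frac1{\sqrt d}$. *)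

theory Defs
  imports "HOL-Probability.Probability"
begin

definition cube :: "nat \<Rightarrow> (nat \<Rightarrow> real) set" where
  "cube d = ({..<d} \<rightarrow>\<^sub>E {- 1 / sqrt (real d), 1 / sqrt (real d)})"

definition num_pos :: "nat \<Rightarrow> (nat \<Rightarrow> real) \<Rightarrow> nat" where
  "num_pos d x = card {i \<in> {..<d}. x i = 1 / sqrt (real d)}"

definition calD :: "nat \<Rightarrow> nat \<Rightarrow> real" where
  "calD n d = ln (real n) / sqrt (real d)"

definition regular_points :: "nat \<Rightarrow> (nat \<Rightarrow> real) set" where
  "regular_points d = {x \<in> cube d. real (num_pos d x) = 3 * real d / 4}"

definition special_points :: "nat \<Rightarrow> nat \<Rightarrow> (nat \<Rightarrow> real) set" where
  "special_points n d = {x \<in> cube d.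
      real (num_pos d x) = 3 * real d / 4 - 12 * real d * calD n d}"

definition inner_d :: "nat \<Rightarrow> (nat \<Rightarrow> real) \<Rightarrow> (nat \<Rightarrow> real) \<Rightarrow> real" where
  "inner_d d a b = (\<Sum>i<d. a i * b i)"

end

theory Submission imports Defs begin

lemma pow_card_sum:
  fixes x :: real
  assumes "finite X"
  shows "(\<Sum>S\<in>Pow X. x ^ card S) = (1 + x) ^ card X"
  using assms
proof (induction X rule: finite_induct)
  case empty
  then show ?case by simp
next
  case (insert a X)
  have disj: "Pow X \<inter> insert a ` Pow X = {}" using insert by auto
  have inj: "inj_on (insert a) (Pow X)"
    using insert(2) by (intro inj_onI) (metis PowD insert_ident subsetD)
  have "(\<Sum>S\<in>Pow (insert a X). x ^ card S)
      = (\<Sum>S\<in>Pow X. x ^ card S) + (\<Sum>S\<in>insert a ` Pow X. x ^ card S)"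
    unfolding Pow_insert using insert(1) disj by (intro sum.union_disjoint) auto
  also have "(\<Sum>S\<in>insert a ` Pow X. x ^ card S) = (\<Sum>S\<in>Pow X. x ^ card (insert a S))"
    using inj by (simp add: sum.reindex)
  also have "\<dots> = (\<Sum>S\<in>Pow X. x * x ^ card S)"
  proof (intro sum.cong refl)
    fix S assume "S \<in> Pow X"
    then have "finite S" "a \<notin> S" using insert(1,2) finite_subset by auto
    then show "x ^ card (insert a S) = x * x ^ card S" by simp
  qed
  also have "\<dots> = x * (1 + x) ^ card X" using insert(3) by (simp add: sum_distrib_left[symmetric])
  finally show ?case using insert by (simp add: algebra_simps)
qed

lemma choose_ratio:
  assumes "s \<le> m" "m \<le> N"
  shows "real ((N - s) choose (m - s)) \<le> real (N choose m) * (real m / real N) ^ s"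
  using assms
proof (induction s arbitrary: N m)
  case 0
  then show ?case by simp
next
  case (Suc s)
  then obtain m' N' where mN: "m = Suc m'" "N = Suc N'" by (metis Suc_le_D le_trans)
  have le: "s \<le> m'" "m' \<le> N'" using Suc.prems mN by auto
  have IH: "real ((N' - s) choose (m' - s)) \<le> real (N' choose m') * (real m' / real N') ^ s"
    using Suc.IH[OF le] .
  have eq: "real (N' choose m') = real (N choose m) * (real m / real N)"
  proof -
    have "real (Suc N' * (N' choose m')) = real ((Suc N' choose Suc m') * Suc m')"
      using Suc_times_binomial_eq by presburger
    then show ?thesis using mN by (simp add: field_simps)
  qed
  have q: "real m' / real N' \<le> real m / real N"
  proof (cases "N' = 0")
    case True then show ?thesis by simp
  next
    case False
    then show ?thesis using le mN by (simp add: field_simps)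
  qed
  have "real ((N - Suc s) choose (m - Suc s)) = real ((N' - s) choose (m' - s))"
    using mN by simp
  also have "\<dots> \<le> real (N' choose m') * (real m' / real N') ^ s" by (rule IH)
  also have "\<dots> \<le> real (N' choose m') * (real m / real N) ^ s"
    by (intro mult_left_mono power_mono q) auto
  also have "\<dots> = real (N choose m) * (real m / real N) ^ Suc s"
    using eq by simp
  finally show ?case .
qed

lemma count_containing:
  assumes "finite U" "S \<subseteq> U" "m \<le> card U"
  shows "real (card {A. A \<subseteq> U \<and> card A = m \<and> S \<subseteq> A})
     \<le> real (card {A. A \<subseteq> U \<and> card A = m}) * (real m / real (card U)) ^ card S"
proof (cases "card S \<le> m")
  case False
  have "{A. A \<subseteq> U \<and> card A = m \<and> S \<subseteq> A} = {}"
    using False assms by (auto dest: card_mono[OF finite_subset])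
  then show ?thesis by (simp only: card.empty of_nat_0) simp
next
  case True
  have fS: "finite S" using assms finite_subset by blast
  have bij: "bij_betw (\<lambda>A. A - S) {A. A \<subseteq> U \<and> card A = m \<and> S \<subseteq> A}
                {B. B \<subseteq> U - S \<and> card B = m - card S}"
  proof (rule bij_betw_byWitness[where f' = "\<lambda>B. B \<union> S"])
    show "\<forall>a\<in>{A. A \<subseteq> U \<and> card A = m \<and> S \<subseteq> A}. a - S \<union> S = a" by auto
    show "\<forall>a\<in>{B. B \<subseteq> U - S \<and> card B = m - card S}. a \<union> S - S = a" by auto
    show "(\<lambda>A. A - S) ` {A. A \<subseteq> U \<and> card A = m \<and> S \<subseteq> A} \<subseteq> {B. B \<subseteq> U - S \<and> card B = m - card S}"
    proof
      fix B assume "B \<in> (\<lambda>A. A - S) ` {A. A \<subseteq> U \<and> card A = m \<and> S \<subseteq> A}"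
      then obtain A where A: "A \<subseteq> U" "card A = m" "S \<subseteq> A" "B = A - S" by auto
      then show "B \<in> {B. B \<subseteq> U - S \<and> card B = m - card S}"
        using card_Diff_subset[OF fS A(3)] by auto
    qed
    show "(\<lambda>B. B \<union> S) ` {B. B \<subseteq> U - S \<and> card B = m - card S} \<subseteq> {A. A \<subseteq> U \<and> card A = m \<and> S \<subseteq> A}"
    proof
      fix A assume "A \<in> (\<lambda>B. B \<union> S) ` {B. B \<subseteq> U - S \<and> card B = m - card S}"
      then obtain B where B: "B \<subseteq> U - S" "card B = m - card S" "A = B \<union> S" by auto
      have fB: "finite B" using B(1) assms(1) finite_subset by blast
      have "card A = card B + card S" 
      proof -
        have "B \<inter> S = {}" using B(1) by auto
        then show ?thesis using B(3) fB fS card_Un_disjoint by (metis B(2))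
      qed
      then show "A \<in> {A. A \<subseteq> U \<and> card A = m \<and> S \<subseteq> A}" using B True assms(2) by auto
    qed
  qed
  have "card {A. A \<subseteq> U \<and> card A = m \<and> S \<subseteq> A} = card {B. B \<subseteq> U - S \<and> card B = m - card S}"
    using bij_betw_same_card[OF bij] .
  also have "\<dots> = (card U - card S) choose (m - card S)"
    using n_subsets[of "U - S" "m - card S"] assms card_Diff_subset[OF fS assms(2)] by simp
  finally have c: "card {A. A \<subseteq> U \<and> card A = m \<and> S \<subseteq> A} = (card U - card S) choose (m - card S)" .
  have "card {A. A \<subseteq> U \<and> card A = m} = card U choose m" using n_subsets[OF assms(1)] .
  then show ?thesis using c choose_ratio[OF True assms(3)] by simp
qed

lemma mgf_bound:
  fixes x :: real
  assumes "finite U" "P \<subseteq> U" "m \<le> card U" "x \<ge> 0"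
  shows "(\<Sum>A\<in>{A. A \<subseteq> U \<and> card A = m}. (1 + x) ^ card (P \<inter> A))
     \<le> real (card {A. A \<subseteq> U \<and> card A = m}) * (1 + x * (real m / real (card U))) ^ card P"
proof -
  define F where "F = {A. A \<subseteq> U \<and> card A = m}"
  define q where "q = real m / real (card U)"
  have fF: "finite F" unfolding F_def using assms(1) by simp
  have fP: "finite P" using assms finite_subset by blast
  have "(\<Sum>A\<in>F. (1 + x) ^ card (P \<inter> A)) = (\<Sum>A\<in>F. \<Sum>S\<in>Pow (P \<inter> A). x ^ card S)"
    using fP by (intro sum.cong refl) (metis pow_card_sum finite_Int)
  also have "\<dots> = (\<Sum>A\<in>F. \<Sum>S\<in>{S \<in> Pow P. S \<subseteq> A}. x ^ card S)"
    by (intro sum.cong refl) auto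
  also have "\<dots> = (\<Sum>S\<in>Pow P. \<Sum>A | A \<in> F \<and> S \<subseteq> A. x ^ card S)"
    using fF fP by (intro sum.swap_restrict) auto
  also have "\<dots> = (\<Sum>S\<in>Pow P. x ^ card S * real (card {A \<in> F. S \<subseteq> A}))"
    by (intro sum.cong refl) simp
  also have "\<dots> \<le> (\<Sum>S\<in>Pow P. x ^ card S * (real (card F) * q ^ card S))"
  proof (intro sum_mono mult_left_mono)
    fix S assume "S \<in> Pow P"
    then have "S \<subseteq> U" using assms by auto
    have "{A \<in> F. S \<subseteq> A} = {A. A \<subseteq> U \<and> card A = m \<and> S \<subseteq> A}" unfolding F_def by auto
    then show "real (card {A \<in> F. S \<subseteq> A}) \<le> real (card F) * q ^ card S"
      using count_containing[OF assms(1) \<open>S \<subseteq> U\<close> assms(3)] unfolding F_def q_def by simp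
  qed (use assms in auto)
  also have "\<dots> = real (card F) * (\<Sum>S\<in>Pow P. (x * q) ^ card S)"
    by (simp add: sum_distrib_left power_mult_distrib algebra_simps)
  also have "\<dots> = real (card F) * (1 + x * q) ^ card P"
    using fP by (simp add: pow_card_sum)
  finally show ?thesis unfolding F_def q_def .
qed

lemma tail_bound:
  fixes l t K :: real
  assumes "finite U" "P \<subseteq> U" "m \<le> card U" "l \<ge> 0" "real (card P) \<le> K"
  shows "real (card {A. A \<subseteq> U \<and> card A = m \<and>
            real (card (P \<inter> A)) > real m / real (card U) * real (card P) + t})
     \<le> real (card {A. A \<subseteq> U \<and> card A = m}) * exp (- l * t + K * l\<^sup>2 / 8)"
proof -
  define F where "F = {A. A \<subseteq> U \<and> card A = m}"
  define q where "q = real m / real (card U)"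
  define y0 where "y0 = q * real (card P) + t"
  define E where "E = {A \<in> F. real (card (P \<inter> A)) > y0}"
  have fF: "finite F" unfolding F_def using assms(1) by simp
  have q01: "q \<ge> 0" unfolding q_def by simp
  have EF: "E \<subseteq> F" unfolding E_def by auto
  have "real (card E) = (\<Sum>A\<in>E. 1)" by simp
  also have "\<dots> \<le> (\<Sum>A\<in>E. exp (l * (real (card (P \<inter> A)) - y0)))"
  proof (intro sum_mono)
    fix A assume "A \<in> E"
    then have "real (card (P \<inter> A)) - y0 \<ge> 0" unfolding E_def by auto
    then have "l * (real (card (P \<inter> A)) - y0) \<ge> 0" using assms(4) by simp
    then show "1 \<le> exp (l * (real (card (P \<inter> A)) - y0))" by simp
  qed
  also have "\<dots> \<le> (\<Sum>A\<in>F. exp (l * (real (card (P \<inter> A)) - y0)))"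
    using fF EF by (intro sum_mono2) auto
  also have "\<dots> = exp (- l * y0) * (\<Sum>A\<in>F. (1 + (exp l - 1)) ^ card (P \<inter> A))"
    by (simp add: sum_distrib_left exp_of_nat_mult[symmetric] exp_add[symmetric] algebra_simps)
  also have "\<dots> \<le> exp (- l * y0) * (real (card F) * (1 + (exp l - 1) * q) ^ card P)"
    using mgf_bound[OF assms(1,2,3), of "exp l - 1"] assms(4) unfolding F_def q_def
    by (intro mult_left_mono) auto
  also have "\<dots> \<le> exp (- l * y0) * (real (card F) * exp (l * q + l\<^sup>2 / 8) ^ card P)"
  proof -
    have pos: "1 + (exp l - 1) * q > 0"
      using q01 assms(4) by (intro add_pos_nonneg mult_nonneg_nonneg) auto
    have "- l * q + ln (1 + q * (exp l - 1)) \<le> l\<^sup>2 / 8"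
      using Hoeffdings_lemma_aux[OF assms(4) q01] by simp
    then have "ln (1 + (exp l - 1) * q) \<le> l * q + l\<^sup>2 / 8" by (simp add: mult.commute)
    then have "1 + (exp l - 1) * q \<le> exp (l * q + l\<^sup>2 / 8)"
      using pos by (metis exp_le_cancel_iff exp_ln)
    then show ?thesis using pos
      by (intro mult_left_mono power_mono) auto
  qed
  also have "\<dots> = real (card F) * exp (- l * t + real (card P) * l\<^sup>2 / 8)"
    unfolding y0_def
    by (simp add: exp_of_nat_mult[symmetric] exp_add[symmetric] algebra_simps)
  also have "\<dots> \<le> real (card F) * exp (- l * t + K * l\<^sup>2 / 8)"
    using assms(5) by (intro mult_left_mono) (auto intro: mult_right_mono)
  finally show ?thesis unfolding E_def F_def y0_def q_def
    by (simp add: conj_assoc)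
qed

lemma card_filter_bij:
  assumes "bij_betw f X Y"
  shows "card {x \<in> X. Q (f x)} = card {y \<in> Y. Q y}"
proof -
  have "inj_on f {x \<in> X. Q (f x)}"
    using bij_betw_imp_inj_on[OF assms] by (rule inj_on_subset) auto
  moreover have "f ` {x \<in> X. Q (f x)} = {y \<in> Y. Q y}"
    using bij_betw_imp_surj_on[OF assms] by auto
  ultimately show ?thesis by (metis card_image)
qed

lemma sum_ind_card:
  assumes "finite U" "X \<subseteq> U"
  shows "(\<Sum>i\<in>U. (if i \<in> X then 1 else 0 :: real)) = real (card X)"
proof -
  have "(\<Sum>i\<in>U. (if i \<in> X then 1 else 0 :: real)) = real (card (U \<inter> X))"
    using assms(1) by (simp add: sum.If_cases)
  also have "U \<inter> X = X" using assms(2) by auto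
  finally show ?thesis .
qed

lemma ln_ge_half:
  assumes "(n::nat) \<ge> 2"
  shows "ln (real n) \<ge> 1/2"
proof -
  have "exp (1/2::real) * exp (1/2) = exp 1" by (simp add: exp_add[symmetric])
  also have "\<dots> \<le> 3" by (rule exp_le)
  finally have "exp (1/2::real) * exp (1/2) \<le> 3" .
  then have "exp (1/2::real) \<le> 2"
  proof -
    assume h: "exp (1/2::real) * exp (1/2) \<le> 3"
    show ?thesis
    proof (rule ccontr)
      assume "\<not> exp (1/2::real) \<le> 2"
      then have "exp (1/2::real) > 2" by simp
      then have "exp (1/2::real) * exp (1/2) > 2 * 2" by (intro mult_strict_mono) auto
      then show False using h by simp
    qed
  qed
  also have "\<dots> \<le> real n" using assms by simp
  finally have "exp (1/2::real) \<le> real n" .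
  moreover have "0 < real n" using assms by simp
  ultimately show ?thesis using ln_ge_iff by blast
qed

theorem mainTheorem20:
  fixes n d :: nat and b :: "nat \<Rightarrow> real"
  assumes "n \<ge> 1" and "d > 0"
    and "3 * real d / 4 \<in> \<int>"
    and "12 * real d * calD n d \<in> \<int>"
    and "real d \<ge> 8 * (ln (real n))\<^sup>2"
    and "b \<in> special_points n d"
  shows "measure_pmf.prob (pmf_of_set (regular_points d))
           {a. inner_d d a b > 1/4 - 6 * calD n d} \<le> 1 / real n ^ 3
         \<and> measure_pmf.prob (pmf_of_set (regular_points d))
           {a. inner_d d a b < 1/4 - 18 * calD n d} \<le> 1 / real n ^ 3"
proof -
  define s where "s = sqrt (real d)"
  define L where "L = ln (real n)"
  define U where "U = {..<d}"
  have s_pos: "s > 0" using assms(2) unfolding s_def by simp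
  have ss: "s * s = real d" unfolding s_def by simp
  have L0: "L \<ge> 0" using assms(1) unfolding L_def by simp
  have fU: "finite U" and cU: "card U = d" unfolding U_def by auto
  have D: "calD n d = L / s" unfolding calD_def L_def s_def ..
  obtain k :: int where k: "3 * real d / 4 = of_int k" using assms(3) Ints_cases by metis
  define m where "m = nat k"
  have m: "real m = 3 * real d / 4" unfolding m_def using k
    by (metis of_int_0_le_iff of_nat_nat nat_0_le of_int_of_nat_eq zero_le_divide_iff mult_nonneg_nonneg of_nat_0_le_iff zero_le_numeral order.refl)
  have mle: "m \<le> d" using m by (simp flip: of_nat_le_iff)
  have dm: "real (d - m) = real d / 4" using m mle by (simp add: of_nat_diff)
  define Aof where "Aof = (\<lambda>a::nat\<Rightarrow>real. {i \<in> U. a i = 1 / s})"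
  define F where "F = (\<lambda>k. {A. A \<subseteq> U \<and> card A = k})"
  define R where "R = regular_points d"
  have cube_val: "a i = (if i \<in> Aof a then 1 else -1) / s" if "a \<in> cube d" "i \<in> U" for a i
    using that unfolding cube_def Aof_def U_def s_def by (auto simp: PiE_iff)
  have R_eq: "R = {a \<in> cube d. card (Aof a) = m}"
    unfolding R_def regular_points_def num_pos_def Aof_def U_def s_def
    using m by (metis (lifting) of_nat_eq_iff)
  have bijA: "bij_betw Aof R (F m)"
  proof (rule bij_betw_imageI)
    show "inj_on Aof R"
    proof (rule inj_onI)
      fix a a' assume a: "a \<in> R" "a' \<in> R" "Aof a = Aof a'"
      have "a \<in> cube d" "a' \<in> cube d" using a R_eq by auto
      then show "a = a'" unfolding cube_def
      proof (rule PiE_ext)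
        fix i assume "i \<in> {..<d}"
        then show "a i = a' i" using cube_val[OF \<open>a \<in> cube d\<close>] cube_val[OF \<open>a' \<in> cube d\<close>] a(3)
          unfolding U_def by metis
      qed
    qed
    show "Aof ` R = F m"
    proof
      show "Aof ` R \<subseteq> F m" unfolding R_eq F_def Aof_def by auto
      show "F m \<subseteq> Aof ` R"
      proof
        fix A assume A: "A \<in> F m"
        define a where "a = (\<lambda>i\<in>U. if i \<in> A then 1 / s else - 1 / s)"
        have ac: "a \<in> cube d" unfolding a_def cube_def U_def s_def by auto
        have "Aof a = A" using A s_pos unfolding Aof_def a_def F_def by auto
        then show "A \<in> Aof ` R" using ac A unfolding R_eq F_def by auto
      qed
    qed
  qed
  have finF: "finite (F k)" for k unfolding F_def using fU by simp
  have cardF: "card (F m) > 0"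
    unfolding F_def using n_subsets[OF fU, of m] cU mle by simp
  have finR: "finite R" and cardR: "card R = card (F m)"
    using bijA finF bij_betw_finite bij_betw_same_card by blast+
  have Rne: "R \<noteq> {}" using cardR cardF by auto
  have bc: "b \<in> cube d" using assms(6) unfolding special_points_def by auto
  define P where "P = Aof b"
  define p where "p = card P"
  have PU: "P \<subseteq> U" unfolding P_def Aof_def by auto
  have p: "real p = 3 * real d / 4 - 12 * s * L"
  proof -
    have "real p = 3 * real d / 4 - 12 * real d * calD n d"
      using assms(6) unfolding special_points_def num_pos_def p_def P_def Aof_def U_def s_def by auto
    also have "12 * real d * calD n d = 12 * s * L" unfolding D using s_pos ss[symmetric]
      by (simp add: field_simps)
    finally show ?thesis .
  qed
  have pK: "real p \<le> 3 * real d / 4" using p s_pos L0 by simp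
  have inner: "inner_d d a b = (4 * real (card (P \<inter> Aof a)) - 2 * real (card (Aof a)) - 2 * real p + real d) / real d"
    if ac: "a \<in> cube d" for a
  proof -
    have AU: "Aof a \<subseteq> U" unfolding Aof_def by auto
    have "inner_d d a b = (\<Sum>i\<in>U. (4 * (if i \<in> P \<inter> Aof a then 1 else 0) - 2 * (if i \<in> Aof a then 1 else 0)
          - 2 * (if i \<in> P then 1 else 0) + 1) / real d)"
      unfolding inner_d_def U_def[symmetric]
    proof (intro sum.cong refl)
      fix i assume i: "i \<in> U"
      show "a i * b i = (4 * (if i \<in> P \<inter> Aof a then 1 else 0) - 2 * (if i \<in> Aof a then 1 else 0)
          - 2 * (if i \<in> P then 1 else 0) + 1) / real d"
        unfolding cube_val[OF ac i] cube_val[OF bc i] P_def using ss[symmetric] s_pos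
        by (auto simp: field_simps)
    qed
    also have "\<dots> = (4 * (\<Sum>i\<in>U. (if i \<in> P \<inter> Aof a then 1 else 0)) - 2 * (\<Sum>i\<in>U. (if i \<in> Aof a then 1 else 0))
          - 2 * (\<Sum>i\<in>U. (if i \<in> P then 1 else 0)) + (\<Sum>i\<in>U. 1)) / real d"
      by (simp add: sum_divide_distrib[symmetric] sum.distrib sum_subtractf sum_distrib_left)
    also have "\<dots> = (4 * real (card (P \<inter> Aof a)) - 2 * real (card (Aof a)) - 2 * real p + real d) / real d"
    proof -
      have e1: "(\<Sum>i\<in>U. (if i \<in> P \<inter> Aof a then 1 else 0::real)) = real (card (P \<inter> Aof a))"
        using sum_ind_card[OF fU] PU by blast
      have e2: "(\<Sum>i\<in>U. (if i \<in> Aof a then 1 else 0::real)) = real (card (Aof a))"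
        using sum_ind_card[OF fU] AU by blast
      have e3: "(\<Sum>i\<in>U. (if i \<in> P then 1 else 0::real)) = real p"
        using sum_ind_card[OF fU] PU unfolding p_def by blast
      have e4: "(\<Sum>i\<in>U. (1::real)) = real d" using cU by simp
      show ?thesis by (simp only: e1 e2 e3 e4)
    qed
    finally show ?thesis .
  qed
  define l where "l = 8 * L / s"
  define t where "t = 3 / 2 * s * L"
  have q34: "real m / real (card U) = 3/4" using m cU assms(2) by simp
  have q14: "real (d - m) / real (card U) = 1/4" using dm cU assms(2) by simp
  have l0: "l \<ge> 0" unfolding l_def using L0 s_pos by simp
  have expo: "exp (- l * t + 3 * real d / 4 * l\<^sup>2 / 8) \<le> 1 / real n ^ 3"
  proof -
    have "- l * t + 3 * real d / 4 * l\<^sup>2 / 8 = - 6 * L\<^sup>2"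
      unfolding l_def t_def using s_pos ss[symmetric] by (simp add: field_simps power2_eq_square)
    also have "\<dots> \<le> - 3 * L"
    proof (cases "n = 1")
      case True then show ?thesis unfolding L_def by simp
    next
      case False
      then have "L \<ge> 1/2" unfolding L_def using assms(1) ln_ge_half by simp
      then have "L * L \<ge> (1/2) * L" using L0 by (intro mult_right_mono) auto
      then show ?thesis by (simp add: power2_eq_square)
    qed
    finally have "exp (- l * t + 3 * real d / 4 * l\<^sup>2 / 8) \<le> exp (- (real 3 * L))" by simp
    also have "\<dots> = 1 / real n ^ 3"
      unfolding exp_minus exp_of_nat_mult L_def using assms(1) by (simp add: divide_inverse)
    finally show ?thesis .
  qed
  have prob_eq: "measure_pmf.prob (pmf_of_set R) E = real (card (R \<inter> E)) / real (card R)" for E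
    using measure_pmf_of_set[OF Rne finR] .
  have up: "measure_pmf.prob (pmf_of_set R) {a. inner_d d a b > 1/4 - 6 * calD n d} \<le> 1 / real n ^ 3"
  proof -
    have "R \<inter> {a. inner_d d a b > 1/4 - 6 * calD n d}
        = {a \<in> R. real m / real (card U) * real (card P) + t < real (card (P \<inter> Aof a))}"
    proof -
      have "inner_d d a b > 1/4 - 6 * calD n d \<longleftrightarrow> real m / real (card U) * real (card P) + t < real (card (P \<inter> Aof a))"
        if "a \<in> R" for a
      proof -
        have ac: "a \<in> cube d" and cA: "card (Aof a) = m" using that R_eq by auto
        have RHS: "1/4 - 6 * (L / s) = (real d / 4 - 6 * s * L) / real d"
          using s_pos ss[symmetric] by (simp add: field_simps)
        have "inner_d d a b > 1/4 - 6 * calD n d \<longleftrightarrow>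
          (4 * real (card (P \<inter> Aof a)) - 2 * real m - 2 * real p + real d) / real d > (real d / 4 - 6 * s * L) / real d"
          unfolding inner[OF ac] cA D RHS by simp
        also have "\<dots> \<longleftrightarrow> 4 * real (card (P \<inter> Aof a)) - 2 * real m - 2 * real p + real d > real d / 4 - 6 * s * L"
          using assms(2) by (simp add: divide_strict_right_mono_neg divide_less_cancel)
        also have "\<dots> \<longleftrightarrow> real m / real (card U) * real (card P) + t < real (card (P \<inter> Aof a))"
          unfolding q34 p_def[symmetric] t_def using p m by linarith
        finally show ?thesis .
      qed
      then show ?thesis by auto
    qed
    then have "real (card (R \<inter> {a. inner_d d a b > 1/4 - 6 * calD n d}))
        = real (card {A \<in> F m. real m / real (card U) * real (card P) + t < real (card (P \<inter> A))})"
      using card_filter_bij[OF bijA] by simp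
    also have "\<dots> \<le> real (card (F m)) * exp (- l * t + 3 * real d / 4 * l\<^sup>2 / 8)"
      using tail_bound[OF fU PU, of m l "3 * real d / 4" t] mle cU l0 pK unfolding F_def p_def
      by (simp add: conj_assoc)
    finally have "real (card (R \<inter> {a. inner_d d a b > 1/4 - 6 * calD n d})) / real (card R)
        \<le> exp (- l * t + 3 * real d / 4 * l\<^sup>2 / 8)"
      using cardR cardF by (simp add: divide_le_eq mult.commute)
    then show ?thesis unfolding prob_eq using expo by linarith
  qed
  have bijC: "bij_betw (\<lambda>A. U - A) (F m) (F (d - m))"
  proof (rule bij_betw_byWitness[where f' = "\<lambda>A. U - A"])
    show "\<forall>a\<in>F m. U - (U - a) = a" unfolding F_def by auto
    show "\<forall>a\<in>F (d - m). U - (U - a) = a" unfolding F_def by auto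
    show "(\<lambda>A. U - A) ` F m \<subseteq> F (d - m)" unfolding F_def using fU cU
      by (auto simp: card_Diff_subset finite_subset)
    show "(\<lambda>A. U - A) ` F (d - m) \<subseteq> F m" unfolding F_def using fU cU mle
      by (auto simp: card_Diff_subset finite_subset)
  qed
  have bijB: "bij_betw (\<lambda>a. U - Aof a) R (F (d - m))"
    using bij_betw_trans[OF bijA bijC] by (simp add: comp_def)
  have low: "measure_pmf.prob (pmf_of_set R) {a. inner_d d a b < 1/4 - 18 * calD n d} \<le> 1 / real n ^ 3"
  proof -
    have "R \<inter> {a. inner_d d a b < 1/4 - 18 * calD n d}
        = {a \<in> R. real (d - m) / real (card U) * real (card P) + t < real (card (P \<inter> (U - Aof a)))}"
    proof -
      have "inner_d d a b < 1/4 - 18 * calD n d \<longleftrightarrow> real (d - m) / real (card U) * real (card P) + t < real (card (P \<inter> (U - Aof a)))"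
        if "a \<in> R" for a
      proof -
        have ac: "a \<in> cube d" and cA: "card (Aof a) = m" using that R_eq by auto
        have cc: "real (card (P \<inter> (U - Aof a))) = real p - real (card (P \<inter> Aof a))"
        proof -
          have "P \<inter> (U - Aof a) = P - (P \<inter> Aof a)" using PU by auto
          moreover have "finite P" using PU fU finite_subset by blast
          ultimately show ?thesis unfolding p_def
            by (simp add: card_Diff_subset of_nat_diff card_mono)
        qed
        have RHS: "1/4 - 18 * (L / s) = (real d / 4 - 18 * s * L) / real d"
          using s_pos ss[symmetric] by (simp add: field_simps)
        have "inner_d d a b < 1/4 - 18 * calD n d \<longleftrightarrow>
          (4 * real (card (P \<inter> Aof a)) - 2 * real m - 2 * real p + real d) / real d < (real d / 4 - 18 * s * L) / real d"
          unfolding inner[OF ac] cA D RHS by simp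
        also have "\<dots> \<longleftrightarrow> 4 * real (card (P \<inter> Aof a)) - 2 * real m - 2 * real p + real d < real d / 4 - 18 * s * L"
          using assms(2) by (simp add: divide_less_cancel)
        also have "\<dots> \<longleftrightarrow> real (d - m) / real (card U) * real (card P) + t < real (card (P \<inter> (U - Aof a)))"
          unfolding cc q14 p_def[symmetric] t_def using p m by linarith
        finally show ?thesis .
      qed
      then show ?thesis by auto
    qed
    then have "real (card (R \<inter> {a. inner_d d a b < 1/4 - 18 * calD n d}))
        = real (card {A \<in> F (d - m). real (d - m) / real (card U) * real (card P) + t < real (card (P \<inter> A))})"
      using card_filter_bij[OF bijB] by simp
    also have "\<dots> \<le> real (card (F (d - m))) * exp (- l * t + 3 * real d / 4 * l\<^sup>2 / 8)"
      using tail_bound[OF fU PU, of "d - m" l "3 * real d / 4" t] mle cU l0 pK unfolding F_def p_def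
      by (simp add: conj_assoc)
    also have "card (F (d - m)) = card R" using bijB bij_betw_same_card by metis
    finally have "real (card (R \<inter> {a. inner_d d a b < 1/4 - 18 * calD n d})) / real (card R)
        \<le> exp (- l * t + 3 * real d / 4 * l\<^sup>2 / 8)"
      using cardR cardF by (simp add: divide_le_eq mult.commute)
    then show ?thesis unfolding prob_eq using expo by linarith
  qed
  show ?thesis using up low unfolding R_def by simp
qed

end
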